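(* Let $X=(X_1,\ldots,X_q)^T$ be a vector of mutually independent Poisson random variables with positive means $\lambda=(\lambda_1,\ldots,\lambda_q)^T$. Let $A \in \{0,1\}^{\ell\times q}$ have pairwise distinct nonzero columns, let $Y=AX$, and let $K_Y(t)=\log E[e^{t^TY}]$. Let $\mathcal B=\{0,1\}^\ell$, $\mathcal B_0=\mathcal B\setminus\{0\}$, with the componentwise order $\le$; let $\mathcal A\subseteq\mathcal B_0$ be the set of columns of $A$ and $\rho(a_{*,j})=\lambda_j$, $\rho(v)=0$ for $v\notin\mathcal A$. For $v\in\mathcal B_0$ with support $\{i_1<\cdots<i_p\}$ let $\phi(v)=\frac{\partial^p}{\partial t_{i_1}\cdots\partial t_{i_p}}K_Y(t)\big|_{t=0}$. For $v\in\mathcal B$, a successor of $v$ is $w\in\mathcal B_0$ with $v<w$ and no $z\in\mathcal B_0$ with $v<z<w$; write $\rightarrow v$ for the set of successors. Run the following algorithm: (1) set $\mathcal Q=(0,\ldots,0)^T$ (a FIFO queue containing the zero vector) and $\mathcal V=\varnothing$; (2) remove the first element $v$ from $\mathcal Q$; (3) for each $w\in\rightarrow v$ with $\phi(w)>0$ that is not already the first component of a pair in $\mathcal V$, append $w$ to $\mathcal Q$ and add $(w,\phi(w))$ to $\mathcal V$; (4) if $\mathcal Q\neq\varnothing$ go to (2), otherwise stop. At termination write $\mathcal V=\{(w_1,\phi(w_1)),\ldots,(w_k,\phi(w_k))\}$, $\mathcal S=(w_1,\ldots,w_k)$, let $M_{\mathcal S}\in\{0,1\}^{k\times k}$ be given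 by $(M_{\mathcal S})_{i,j}=1$ iff $w_i\le w_j$, define $(\psi(w_1),\ldots,\psi(w_k))^T = M_{\mathcal S}^{-1}(\phi(w_1),\ldots,\phi(w_k))^T$, and $\hat{\mathcal A}=\{w_i:\psi(w_i)>0\}$. Then: (1) $\mathcal V=\{(w,\phi(w)) : w\in\mathcal B_0,\ \phi(w)>0\}$; (2) $\hat{\mathcal A}=\mathcal A$ and $\psi(v)=\rho(v)$ for every $v\in\mathcal A$.
   Context: $a_{*,j}$ is the $j$-th column of $A$; $w<v$ means $w\le v$ and $w\ne v$ in the componentwise order. $M_{\mathcal S}$ is invertible since the $w_i$ are distinct. *)

theory Defs
  imports "HOL-Probability.Probability" "Jordan_Normal_Form.Gauss_Jordan_Elimination"
begin

text \<open>Binary vectors of length l are represented as functions nat \<Rightarrow> nat with values in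
  {0,1} on {..<l} and value 0 outside {..<l}.\<close>

definition binvecs :: "nat \<Rightarrow> (nat \<Rightarrow> nat) set" where
  "binvecs l = {v. (\<forall>i<l. v i \<in> {0,1}) \<and> (\<forall>i\<ge>l. v i = 0)}"

definition binvecs0 :: "nat \<Rightarrow> (nat \<Rightarrow> nat) set" where
  "binvecs0 l = binvecs l - {(\<lambda>_. 0)}"

definition col :: "nat \<Rightarrow> (nat \<Rightarrow> nat \<Rightarrow> nat) \<Rightarrow> nat \<Rightarrow> (nat \<Rightarrow> nat)" where
  "col l A j = (\<lambda>i. if i < l then A i j else 0)"

definition colset :: "nat \<Rightarrow> nat \<Rightarrow> (nat \<Rightarrow> nat \<Rightarrow> nat) \<Rightarrow> (nat \<Rightarrow> nat) set" where
  "colset l q A = col l A ` {..<q}"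

definition rho :: "nat \<Rightarrow> nat \<Rightarrow> (nat \<Rightarrow> nat \<Rightarrow> nat) \<Rightarrow> (nat \<Rightarrow> real) \<Rightarrow> (nat \<Rightarrow> nat) \<Rightarrow> real" where
  "rho l q A lam v = (if \<exists>j<q. col l A j = v then lam (THE j. j < q \<and> col l A j = v) else 0)"

definition Yvec :: "nat \<Rightarrow> (nat \<Rightarrow> nat \<Rightarrow> nat) \<Rightarrow> (nat \<Rightarrow> 'a \<Rightarrow> nat) \<Rightarrow> nat \<Rightarrow> 'a \<Rightarrow> nat" where
  "Yvec q A X i \<omega> = (\<Sum>j<q. A i j * X j \<omega>)"

definition cgf :: "'a measure \<Rightarrow> nat \<Rightarrow> (nat \<Rightarrow> 'a \<Rightarrow> nat) \<Rightarrow> (nat \<Rightarrow> real) \<Rightarrow> real" where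
  "cgf M l Y t = ln (\<integral>\<omega>. exp (\<Sum>i<l. t i * real (Y i \<omega>)) \<partial>M)"

definition partial :: "nat \<Rightarrow> ((nat \<Rightarrow> real) \<Rightarrow> real) \<Rightarrow> (nat \<Rightarrow> real) \<Rightarrow> real" where
  "partial i f = (\<lambda>t. deriv (\<lambda>s. f (t(i := s))) (t i))"

definition supp :: "nat \<Rightarrow> (nat \<Rightarrow> nat) \<Rightarrow> nat set" where
  "supp l v = {i. i < l \<and> v i \<noteq> 0}"

definition phi :: "'a measure \<Rightarrow> nat \<Rightarrow> (nat \<Rightarrow> 'a \<Rightarrow> nat) \<Rightarrow> (nat \<Rightarrow> nat) \<Rightarrow> real" where
  "phi M l Y v = foldr partial (sorted_list_of_set (supp l v)) (cgf M l Y) (\<lambda>_. 0)"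

definition succs :: "nat \<Rightarrow> (nat \<Rightarrow> nat) \<Rightarrow> (nat \<Rightarrow> nat) set" where
  "succs l v = {w \<in> binvecs0 l. v < w \<and> \<not> (\<exists>z \<in> binvecs0 l. v < z \<and> z < w)}"

text \<open>The order in which the successors are visited in step (3) is not
  specified, so it is chosen nondeterministically (ws is any enumeration of the new vertices).\<close>
inductive alg_step :: "nat \<Rightarrow> ((nat \<Rightarrow> nat) \<Rightarrow> real) \<Rightarrow>
    (nat \<Rightarrow> nat) list \<times> ((nat \<Rightarrow> nat) \<times> real) list \<Rightarrow>
    (nat \<Rightarrow> nat) list \<times> ((nat \<Rightarrow> nat) \<times> real) list \<Rightarrow> bool"
  for l :: nat and ph :: "(nat \<Rightarrow> nat) \<Rightarrow> real" where
  "distinct ws \<Longrightarrow>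
   set ws = {w \<in> succs l v. ph w > 0 \<and> w \<notin> fst ` set V} \<Longrightarrow>
   alg_step l ph (v # Q, V) (Q @ ws, V @ map (\<lambda>w. (w, ph w)) ws)"

definition alg_result :: "nat \<Rightarrow> ((nat \<Rightarrow> nat) \<Rightarrow> real) \<Rightarrow> ((nat \<Rightarrow> nat) \<times> real) list \<Rightarrow> bool" where
  "alg_result l ph V \<longleftrightarrow> (alg_step l ph)\<^sup>*\<^sup>* ([\<lambda>_. 0], []) ([], V)"

definition MS :: "(nat \<Rightarrow> nat) list \<Rightarrow> real mat" where
  "MS S = mat (length S) (length S) (\<lambda>(i,j). if S ! i \<le> S ! j then 1 else 0)"

definition psi_vec :: "((nat \<Rightarrow> nat) \<times> real) list \<Rightarrow> real vec" where
  "psi_vec V = the (mat_inverse (MS (map fst V))) *\<^sub>v vec (length V) (\<lambda>i. snd (V ! i))"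

end

theory Submission
  imports Defs "Jordan_Normal_Form.Determinant"
begin


lemma poisson_mgf_sums:
  assumes r: "0 < r"
  shows "(\<lambda>n. pmf (poisson_pmf r) n * exp (c * real n)) sums exp (r * (exp c - 1))"
proof -
  have "(\<lambda>n. (r * exp c)^n /\<^sub>R fact n) sums exp (r * exp c)" by (rule exp_converges)
  hence "(\<lambda>n. exp (-r) * ((r * exp c)^n /\<^sub>R fact n)) sums (exp (-r) * exp (r * exp c))"
    by (rule sums_mult)
  moreover have "exp (-r) * exp (r * exp c) = exp (r * (exp c - 1))"
    by (simp add: right_diff_distrib exp_diff exp_minus field_simps)
  moreover have "(\<lambda>n. exp (-r) * ((r * exp c)^n /\<^sub>R fact n)) = (\<lambda>n. pmf (poisson_pmf r) n * exp (c * real n))"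
    using r by (auto simp: fun_eq_iff power_mult_distrib exp_of_nat_mult[symmetric] mult.commute divide_inverse)
  ultimately show ?thesis by simp
qed

lemma poisson_mgf:
  assumes r: "0 < r"
  shows "integrable (measure_pmf (poisson_pmf r)) (\<lambda>k. exp (c * real k))"
    and "(\<integral>k. exp (c * real k) \<partial>measure_pmf (poisson_pmf r)) = exp (r * (exp c - 1))"
proof -
  have s: "(\<lambda>n. pmf (poisson_pmf r) n * exp (c * real n)) sums exp (r * (exp c - 1))"
    by (rule poisson_mgf_sums[OF r])
  have i: "integrable (count_space UNIV) (\<lambda>n. pmf (poisson_pmf r) n * exp (c * real n))"
    using s unfolding integrable_count_space_nat_iff by (simp add: sums_iff abs_mult)
  then show "integrable (measure_pmf (poisson_pmf r)) (\<lambda>k. exp (c * real k))"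
    unfolding measure_pmf_eq_density by (subst integrable_density) auto
  have "(\<integral>k. exp (c * real k) \<partial>measure_pmf (poisson_pmf r)) = (\<integral>n. pmf (poisson_pmf r) n * exp (c * real n) \<partial>count_space UNIV)"
    unfolding measure_pmf_eq_density by (subst integral_density) auto
  also have "\<dots> = exp (r * (exp c - 1))"
    using i s by (subst integral_count_space_nat) (simp_all add: sums_iff)
  finally show "(\<integral>k. exp (c * real k) \<partial>measure_pmf (poisson_pmf r)) = exp (r * (exp c - 1))" .
qed


lemma sum_rewrite:
  "(\<Sum>i<l. t i * real (Yvec q A X i \<omega>)) = (\<Sum>j<q. (\<Sum>i<l. t i * real (A i j)) * real (X j \<omega>))"
  unfolding Yvec_def
  by (simp add: of_nat_sum sum_distrib_left sum_distrib_right mult.assoc sum.swap[of _ "{..<l}"])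

lemma cgf_formula:
  fixes M :: "'a measure" and X :: "nat \<Rightarrow> 'a \<Rightarrow> nat" and lam :: "nat \<Rightarrow> real"
  assumes P: "prob_space M"
    and meas: "\<And>j. j < q \<Longrightarrow> X j \<in> measurable M (count_space UNIV)"
    and lpos: "\<And>j. j < q \<Longrightarrow> lam j > 0"
    and dist: "\<And>j. j < q \<Longrightarrow> distr M (count_space UNIV) (X j) = measure_pmf (poisson_pmf (lam j))"
    and ind: "prob_space.indep_vars M (\<lambda>_. count_space UNIV) X {..<q}"
  shows "cgf M l (Yvec q A X) t = (\<Sum>j<q. lam j * (exp (\<Sum>i<l. t i * real (A i j)) - 1))"
proof -
  interpret prob_space M by (rule P)
  define c where "c j = (\<Sum>i<l. t i * real (A i j))" for j
  define Z where "Z j \<omega> = exp (c j * real (X j \<omega>))" for j \<omega>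
  have eq: "exp (\<Sum>i<l. t i * real (Yvec q A X i \<omega>)) = (\<Prod>j<q. Z j \<omega>)" for \<omega>
    unfolding sum_rewrite Z_def c_def by (simp add: exp_sum)
  have indZ: "indep_vars (\<lambda>_. borel) Z {..<q}"
    unfolding Z_def
    by (rule indep_vars_compose2[OF ind, where Y="\<lambda>j k. exp (c j * real k)"]) auto
  have int: "integrable M (Z j)" and ev: "(\<integral>\<omega>. Z j \<omega> \<partial>M) = exp (lam j * (exp (c j) - 1))"
    if j: "j < q" for j
  proof -
    have "integrable (distr M (count_space UNIV) (X j)) (\<lambda>k. exp (c j * real k))"
      using poisson_mgf(1)[OF lpos[OF j]] dist[OF j] by simp
    then show "integrable M (Z j)" unfolding Z_def
      by (subst (asm) integrable_distr_eq[OF meas[OF j]]) auto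
    have "(\<integral>\<omega>. Z j \<omega> \<partial>M) = (\<integral>k. exp (c j * real k) \<partial>distr M (count_space UNIV) (X j))"
      unfolding Z_def by (subst integral_distr[OF meas[OF j]]) auto
    also have "\<dots> = exp (lam j * (exp (c j) - 1))"
      using poisson_mgf(2)[OF lpos[OF j]] dist[OF j] by simp
    finally show "(\<integral>\<omega>. Z j \<omega> \<partial>M) = exp (lam j * (exp (c j) - 1))" .
  qed
  have "(\<integral>\<omega>. exp (\<Sum>i<l. t i * real (Yvec q A X i \<omega>)) \<partial>M) = (\<integral>\<omega>. (\<Prod>j<q. Z j \<omega>) \<partial>M)"
    by (simp add: eq)
  also have "\<dots> = (\<Prod>j<q. \<integral>\<omega>. Z j \<omega> \<partial>M)"
    by (rule indep_vars_lebesgue_integral) (use indZ int in auto)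
  also have "\<dots> = (\<Prod>j<q. exp (lam j * (exp (c j) - 1)))"
    by (rule prod.cong) (auto simp: ev)
  also have "\<dots> = exp (\<Sum>j<q. lam j * (exp (c j) - 1))"
    by (simp add: exp_sum)
  finally show ?thesis unfolding cgf_def c_def by simp
qed


definition pp :: "nat \<Rightarrow> (nat \<Rightarrow> nat \<Rightarrow> nat) \<Rightarrow> nat \<Rightarrow> (nat \<Rightarrow> real) \<Rightarrow> real" where
  "pp l A j t = (\<Sum>i<l. t i * real (A i j))"

definition GG :: "nat \<Rightarrow> nat \<Rightarrow> (nat \<Rightarrow> nat \<Rightarrow> nat) \<Rightarrow> (nat \<Rightarrow> real) \<Rightarrow> (nat \<Rightarrow> real) \<Rightarrow> real" where
  "GG l q A c t = (\<Sum>j<q. c j * exp (pp l A j t))"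

lemma pp_upd: "i < l \<Longrightarrow> pp l A j (t(i:=s)) = pp l A j t + (s - t i) * real (A i j)"
proof -
  assume i: "i < l"
  have "pp l A j (t(i:=s)) = s * real (A i j) + (\<Sum>k\<in>{..<l}-{i}. t k * real (A k j))"
    unfolding pp_def using i by (subst sum.remove[of _ i]) (auto intro!: sum.cong)
  moreover have "pp l A j t = t i * real (A i j) + (\<Sum>k\<in>{..<l}-{i}. t k * real (A k j))"
    unfolding pp_def using i by (subst sum.remove[of _ i]) auto
  ultimately show ?thesis by (simp add: algebra_simps)
qed

lemma partial_GGC: assumes i: "i < l"
  shows "partial i (\<lambda>t. GG l q A c t + C) = GG l q A (\<lambda>j. c j * real (A i j))"
proof
  fix t :: "nat \<Rightarrow> real"
  have e: "(\<lambda>s. GG l q A c (t(i:=s)) + C) = (\<lambda>s. (\<Sum>j<q. c j * exp (pp l A j t + (s - t i) * real (A i j))) + C)"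
    unfolding GG_def using i by (simp add: pp_upd)
  have "((\<lambda>s. (\<Sum>j<q. c j * exp (pp l A j t + (s - t i) * real (A i j))) + C) has_real_derivative
        (\<Sum>j<q. c j * (exp (pp l A j t + (t i - t i) * real (A i j)) * real (A i j)))) (at (t i))"
    by (auto intro!: derivative_eq_intros) (auto intro!: sum.cong simp: ac_simps)
  hence "deriv (\<lambda>s. GG l q A c (t(i:=s)) + C) (t i) = (\<Sum>j<q. c j * (exp (pp l A j t) * real (A i j)))"
    unfolding e by (simp add: DERIV_imp_deriv)
  thus "partial i (\<lambda>t. GG l q A c t + C) t = GG l q A (\<lambda>j. c j * real (A i j)) t"
    unfolding partial_def GG_def by (simp add: algebra_simps)
qed

lemma partial_GG: assumes i: "i < l"
  shows "partial i (GG l q A c) = GG l q A (\<lambda>j. c j * real (A i j))"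
  using partial_GGC[OF i, of q A c 0] by simp

lemma partial_F: assumes i: "i < l"
  shows "partial i (\<lambda>t. \<Sum>j<q. lam j * (exp (pp l A j t) - 1)) = GG l q A (\<lambda>j. lam j * real (A i j))"
proof -
  have "(\<lambda>t. \<Sum>j<q. lam j * (exp (pp l A j t) - 1)) = (\<lambda>t. GG l q A lam t + (- (\<Sum>j<q. lam j)))"
    unfolding GG_def by (simp add: algebra_simps sum_subtractf)
  then show ?thesis using partial_GGC[OF i, of q A lam "- (\<Sum>j<q. lam j)"] by simp
qed


definition Inv :: "nat \<Rightarrow> ((nat \<Rightarrow> nat) \<Rightarrow> real) \<Rightarrow>
    (nat \<Rightarrow> nat) list \<times> ((nat \<Rightarrow> nat) \<times> real) list \<Rightarrow> bool" where
  "Inv l ph s = (case s of (Q, V) \<Rightarrow>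
     distinct (map fst V) \<and> (\<forall>p\<in>set V. snd p = ph (fst p)) \<and>
     (\<forall>w\<in>fst ` set V. w \<in> binvecs0 l \<and> ph w > 0) \<and>
     set Q \<subseteq> insert (\<lambda>_. 0) (fst ` set V) \<and>
     (\<forall>u \<in> insert (\<lambda>_. 0) (fst ` set V) - set Q. \<forall>w\<in>succs l u. ph w > 0 \<longrightarrow> w \<in> fst ` set V))"

lemma finite_binvecs: "finite (binvecs l)"
proof -
  have "binvecs l \<subseteq> (\<lambda>S i. if i \<in> S then 1 else 0) ` Pow {..<l}"
  proof
    fix v assume v: "v \<in> binvecs l"
    have "v = (\<lambda>i. if i \<in> {i. i < l \<and> v i = 1} then 1 else 0)"
    proof
      fix i show "v i = (if i \<in> {i. i < l \<and> v i = 1} then 1 else 0)"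
        using v unfolding binvecs_def by (cases "i < l") auto
    qed
    then show "v \<in> (\<lambda>S i. if i \<in> S then 1 else 0) ` Pow {..<l}" by blast
  qed
  then show ?thesis by (rule finite_subset) auto
qed

lemma finite_binvecs0: "finite (binvecs0 l)"
  unfolding binvecs0_def using finite_binvecs by auto

lemma Inv_init: "Inv l ph ([\<lambda>_. 0], [])"
  unfolding Inv_def by auto

lemma succs_sub: "succs l v \<subseteq> binvecs0 l"
  unfolding succs_def by auto

lemma Inv_step: assumes "alg_step l ph s s'" "Inv l ph s" shows "Inv l ph s'"
  using assms(1)
proof cases
  case (1 ws v V Q)
  let ?W = "fst ` set V"
  have ws: "set ws = {w \<in> succs l v. ph w > 0 \<and> w \<notin> ?W}" by fact
  have I: "distinct (map fst V)" "\<forall>p\<in>set V. snd p = ph (fst p)"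
     "\<forall>w\<in>?W. w \<in> binvecs0 l \<and> ph w > 0" "set (v#Q) \<subseteq> insert (\<lambda>_. 0) ?W"
     "\<forall>u \<in> insert (\<lambda>_. 0) ?W - set (v#Q). \<forall>w\<in>succs l u. ph w > 0 \<longrightarrow> w \<in> ?W"
    using assms(2) unfolding 1(1,2) Inv_def prod.case by blast+
  have fV': "fst ` set (V @ map (\<lambda>w. (w, ph w)) ws) = ?W \<union> set ws" by (simp add: image_Un image_image)
  have mf: "map fst (V @ map (\<lambda>w. (w, ph w)) ws) = map fst V @ ws"
    by (simp add: comp_def)
  have dj: "set (map fst V) \<inter> set ws = {}" using ws by auto
  have c1: "distinct (map fst (V @ map (\<lambda>w. (w, ph w)) ws))"
    unfolding mf distinct_append using I(1) \<open>distinct ws\<close> dj by blast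
  have c2: "\<forall>p\<in>set (V @ map (\<lambda>w. (w, ph w)) ws). snd p = ph (fst p)" using I(2) by auto
  have c3: "\<forall>w\<in>?W \<union> set ws. w \<in> binvecs0 l \<and> 0 < ph w" using I(3) ws succs_sub[of l v] by blast
  have c4: "set (Q @ ws) \<subseteq> insert (\<lambda>_. 0) (?W \<union> set ws)" using I(4) by auto
  have c5: "\<forall>u\<in>insert (\<lambda>_. 0) (?W \<union> set ws) - set (Q @ ws). \<forall>w\<in>succs l u. 0 < ph w \<longrightarrow> w \<in> ?W \<union> set ws"
  proof (intro ballI impI)
    fix u w assume u: "u \<in> insert (\<lambda>_. 0) (?W \<union> set ws) - set (Q @ ws)" and w: "w \<in> succs l u" "0 < ph w"
    show "w \<in> ?W \<union> set ws"
    proof (cases "u = v")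
      case True then show ?thesis using w ws by blast
    next
      case False
      then have "u \<in> insert (\<lambda>_. 0) ?W - set (v#Q)" using u by auto
      then show ?thesis using I(5) w by blast
    qed
  qed
  show ?thesis unfolding 1(1,2) Inv_def prod.case fV' by (intro conjI c1 c2 c3 c4 c5)
qed

lemma Inv_star: assumes "(alg_step l ph)\<^sup>*\<^sup>* s s'" "Inv l ph s" shows "Inv l ph s'"
  using assms by (induction rule: rtranclp_induct) (auto intro: Inv_step)

lemma Inv_len: assumes "Inv l ph (Q, V)" shows "length V \<le> card (binvecs0 l)"
proof -
  have d: "distinct (map fst V)" and s: "fst ` set V \<subseteq> binvecs0 l" using assms unfolding Inv_def by auto
  have "length V = card (fst ` set V)" using distinct_card[OF d] by simp
  also have "\<dots> \<le> card (binvecs0 l)" using s finite_binvecs0 by (rule card_mono[rotated])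
  finally show ?thesis .
qed

lemma exists_run: "Inv l ph (Q, V) \<Longrightarrow> \<exists>V'. (alg_step l ph)\<^sup>*\<^sup>* (Q, V) ([], V')"
proof (induction "2 * (card (binvecs0 l) - length V) + length Q" arbitrary: Q V rule: less_induct)
  case less
  show ?case
  proof (cases Q)
    case Nil then show ?thesis by (intro exI[of _ V]) simp
  next
    case (Cons v Q')
    let ?S = "{w \<in> succs l v. ph w > 0 \<and> w \<notin> fst ` set V}"
    have fS: "finite ?S" by (rule finite_subset[OF _ finite_binvecs0[of l]]) (use succs_sub[of l v] in blast)
    obtain ws where ws: "set ws = ?S" "distinct ws" using finite_distinct_list[OF fS] by metis
    let ?V' = "V @ map (\<lambda>w. (w, ph w)) ws"
    have st: "alg_step l ph (v # Q', V) (Q' @ ws, ?V')"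
      by (rule alg_step.intros[OF ws(2) ws(1)])
    have inv': "Inv l ph (Q' @ ws, ?V')" using Inv_step[OF st] less.prems unfolding Cons .
    have "length ?V' \<le> card (binvecs0 l)" using Inv_len[OF inv'] .
    then have "2 * (card (binvecs0 l) - length ?V') + length (Q' @ ws) <
               2 * (card (binvecs0 l) - length V) + length Q" unfolding Cons by simp
    then obtain V' where "(alg_step l ph)\<^sup>*\<^sup>* (Q' @ ws, ?V') ([], V')" using less.hyps[OF _ inv'] by blast
    note star' = this
    have "(alg_step l ph)\<^sup>*\<^sup>* (Q, V) ([], V')" unfolding Cons
      by (rule converse_rtranclp_into_rtranclp[where r="alg_step l ph"]) (rule st, rule star')
    then show ?thesis by blast
  qed
qed

lemma exists_result: "\<exists>V. alg_result l ph V"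
  unfolding alg_result_def using exists_run[OF Inv_init] by blast



lemma cover_succ:
  assumes w: "w \<in> binvecs0 l" and i: "i < l" "w i \<noteq> 0"
  shows "w \<in> succs l (w(i:=0))" and "w(i:=0) \<in> binvecs l" and "w(i:=0) \<le> w"
proof -
  have wb: "w \<in> binvecs l" and wn: "w \<noteq> (\<lambda>_. 0)" using w unfolding binvecs0_def by auto
  have wi: "w i = 1" using wb i unfolding binvecs_def by auto
  show ub: "w(i:=0) \<in> binvecs l" using wb unfolding binvecs_def by auto
  show le: "w(i:=0) \<le> w" by (simp add: le_fun_def)
  have lt: "w(i:=0) < w"
    using le wi by (metis fun_upd_same less_le zero_neq_one)
  have nz: "\<not> (\<exists>z \<in> binvecs0 l. w(i:=0) < z \<and> z < w)"
  proof
    assume "\<exists>z \<in> binvecs0 l. w(i:=0) < z \<and> z < w"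
    then obtain z where z: "z \<in> binvecs l" "w(i:=0) < z" "z < w" unfolding binvecs0_def by auto
    have zk: "z k = w k" if "k \<noteq> i" for k
      using z(2,3) that unfolding less_fun_def le_fun_def
      by (metis antisym fun_upd_other)
    have "z i \<in> {0,1}" using z(1) i unfolding binvecs_def by auto
    then have "z = w(i:=0) \<or> z = w"
    proof
      assume "z i = 0" then have "z = w(i:=0)" using zk by (auto simp: fun_eq_iff)
      then show ?thesis ..
    next
      assume "z i \<in> {1}" then have "z i = w i" using wi by simp
      then have "z = w" using zk by (metis ext)
      then show ?thesis ..
    qed
    then show False using z(2,3) less_irrefl by metis
  qed
  show "w \<in> succs l (w(i:=0))" unfolding succs_def using w lt nz by blast
qed

lemma supp_upd: "i < l \<Longrightarrow> w i \<noteq> 0 \<Longrightarrow> supp l (w(i:=0)) = supp l w - {i}"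
  unfolding supp_def by auto

lemma binvecs0_supp: "w \<in> binvecs0 l \<Longrightarrow> supp l w \<noteq> {}"
proof -
  assume w: "w \<in> binvecs0 l"
  then have "w \<noteq> (\<lambda>_. 0)" unfolding binvecs0_def by blast
  have "\<exists>x. w x \<noteq> 0"
  proof (rule ccontr)
    assume "\<not> (\<exists>x. w x \<noteq> 0)"
    then have "w = (\<lambda>_. 0)" by (intro ext) simp
    then show False using \<open>w \<noteq> (\<lambda>_. 0)\<close> by blast
  qed
  then obtain x where x: "w x \<noteq> 0" by blast
  have "w \<in> binvecs l" using w unfolding binvecs0_def by blast
  then have "\<forall>i\<ge>l. w i = 0" unfolding binvecs_def by blast
  then have "x < l" using x by (cases "x < l") auto
  then have "x \<in> supp l w" using x unfolding supp_def by blast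
  then show ?thesis by blast
qed

lemma result_set:
  assumes res: "alg_result l ph V"
    and down: "\<And>u w. u \<in> binvecs0 l \<Longrightarrow> w \<in> binvecs0 l \<Longrightarrow> u \<le> w \<Longrightarrow> ph w > 0 \<Longrightarrow> ph u > 0"
  shows "set V = {(w, ph w) | w. w \<in> binvecs0 l \<and> ph w > 0}" and "distinct (map fst V)"
proof -
  have inv: "Inv l ph ([], V)" using Inv_star[OF res[unfolded alg_result_def] Inv_init] .
  let ?W = "fst ` set V"
  have I: "distinct (map fst V)" "\<forall>p\<in>set V. snd p = ph (fst p)"
     "\<forall>w\<in>?W. w \<in> binvecs0 l \<and> ph w > 0"
     "\<forall>u \<in> insert (\<lambda>_. 0) ?W. \<forall>w\<in>succs l u. ph w > 0 \<longrightarrow> w \<in> ?W"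
    using inv unfolding Inv_def prod.case list.set(1) Diff_empty by blast+
  show "distinct (map fst V)" by (rule I(1))
  have compl: "\<forall>w. card (supp l w) = n \<longrightarrow> w \<in> binvecs0 l \<longrightarrow> ph w > 0 \<longrightarrow> w \<in> ?W" for n
  proof (induction n)
    case 0
    show ?case
    proof (intro allI impI)
      fix w assume a: "card (supp l w) = 0" "w \<in> binvecs0 l"
      have "finite (supp l w)" unfolding supp_def by auto
      then have False using a binvecs0_supp[OF a(2)] by simp
      then show "w \<in> ?W" ..
    qed
  next
    case (Suc n)
    show ?case
    proof (intro allI impI)
      fix w assume c: "card (supp l w) = Suc n" and w: "w \<in> binvecs0 l" and p: "ph w > 0"
      obtain i where i: "i \<in> supp l w" using binvecs0_supp[OF w] by blast
      then have il: "i < l" "w i \<noteq> 0" unfolding supp_def by auto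
      note cs = cover_succ[OF w il]
      have "w(i:=0) \<in> insert (\<lambda>_. 0) ?W"
      proof (cases "w(i:=0) = (\<lambda>_. 0)")
        case False
        then have u0: "w(i:=0) \<in> binvecs0 l" using cs(2) unfolding binvecs0_def by auto
        have "card (supp l (w(i:=0))) = n"
          using c i unfolding supp_upd[of i l w, OF il] by (simp add: supp_def)
        moreover have "ph (w(i:=0)) > 0" using down[OF u0 w cs(3) p] .
        ultimately show ?thesis using Suc.IH u0 by blast
      qed simp
      then show "w \<in> ?W" using I(4) cs(1) p by blast
    qed
  qed
  show "set V = {(w, ph w) | w. w \<in> binvecs0 l \<and> ph w > 0}"
  proof
    show "set V \<subseteq> {(w, ph w) | w. w \<in> binvecs0 l \<and> ph w > 0}"
    proof
      fix p assume pV: "p \<in> set V"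
      obtain a b where ab: "p = (a, b)" by (cases p)
      have "b = ph a" using I(2) pV ab by auto
      moreover have "a \<in> binvecs0 l \<and> ph a > 0" using I(3) pV ab by force
      ultimately show "p \<in> {(w, ph w) | w. w \<in> binvecs0 l \<and> ph w > 0}"
        using ab by blast
    qed
    show "{(w, ph w) | w. w \<in> binvecs0 l \<and> ph w > 0} \<subseteq> set V"
    proof
      fix x assume "x \<in> {(w, ph w) | w. w \<in> binvecs0 l \<and> ph w > 0}"
      then obtain w where x: "x = (w, ph w)" and "w \<in> binvecs0 l" "ph w > 0" by blast
      then have "w \<in> ?W" using compl by blast
      then obtain p where "p \<in> set V" "fst p = w" by blast
      then show "x \<in> set V" using I(2) x by (metis prod.collapse)
    qed
  qed
qed


lemma foldr_F:
  "(\<forall>i\<in>set is. i < l) \<Longrightarrow> is \<noteq> [] \<Longrightarrow>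
   foldr partial is (\<lambda>t. \<Sum>j<q. lam j * (exp (pp l A j t) - 1)) =
   GG l q A (\<lambda>j. lam j * (\<Prod>i\<leftarrow>is. real (A i j)))"
proof (induction "is")
  case Nil then show ?case by simp
next
  case (Cons i rest)
  then have il: "i < l" by simp
  show ?case
  proof (cases "rest = []")
    case True
    then show ?thesis using partial_F[OF il, where q=q and lam=lam and A=A] by simp
  next
    case False
    then have "foldr partial rest (\<lambda>t. \<Sum>j<q. lam j * (exp (pp l A j t) - 1)) =
       GG l q A (\<lambda>j. lam j * (\<Prod>i\<leftarrow>rest. real (A i j)))" using Cons by simp
    then show ?thesis using partial_GG[OF il] by (simp add: ac_simps)
  qed
qed

lemma prod_supp:
  assumes v: "v \<in> binvecs0 l" and Ab: "\<And>i. i < l \<Longrightarrow> A i j \<in> {0, 1}"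
  shows "(\<Prod>i\<in>supp l v. real (A i j)) = (if v \<le> col l A j then 1 else 0)"
proof -
  have vb: "\<forall>i<l. v i \<in> {0,1}" "\<forall>i\<ge>l. v i = 0" using v unfolding binvecs0_def binvecs_def by blast+
  show ?thesis
  proof (cases "v \<le> col l A j")
    case True
    have "real (A i j) = 1" if "i \<in> supp l v" for i
    proof -
      have i: "i < l" "v i \<noteq> 0" using that unfolding supp_def by auto
      have "v i \<le> A i j" using True i(1) unfolding le_fun_def col_def by (metis)
      then show ?thesis using Ab[OF i(1)] i(2) by auto
    qed
    then show ?thesis using True by simp
  next
    case False
    then obtain i where i: "\<not> v i \<le> col l A j i" unfolding le_fun_def by blast
    have il: "i < l" using i vb(2) by (cases "i < l") auto
    have "v i \<noteq> 0" using i by auto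
    then have "i \<in> supp l v" using il unfolding supp_def by blast
    moreover have "A i j = 0" using i il Ab[OF il] vb(1) unfolding col_def by auto
    moreover have "finite (supp l v)" unfolding supp_def by auto
    ultimately show ?thesis using False by (auto intro: prod_zero)
  qed
qed

lemma phi_formula:
  fixes M :: "'a measure" and X :: "nat \<Rightarrow> 'a \<Rightarrow> nat" and lam :: "nat \<Rightarrow> real"
  assumes P: "prob_space M"
    and meas: "\<And>j. j < q \<Longrightarrow> X j \<in> measurable M (count_space UNIV)"
    and lpos: "\<And>j. j < q \<Longrightarrow> lam j > 0"
    and dist: "\<And>j. j < q \<Longrightarrow> distr M (count_space UNIV) (X j) = measure_pmf (poisson_pmf (lam j))"
    and ind: "prob_space.indep_vars M (\<lambda>_. count_space UNIV) X {..<q}"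
    and Ab: "\<And>i j. i < l \<Longrightarrow> j < q \<Longrightarrow> A i j \<in> {0, 1}"
    and v: "v \<in> binvecs0 l"
  shows "phi M l (Yvec q A X) v = (\<Sum>j<q. if v \<le> col l A j then lam j else 0)"
proof -
  have cg: "cgf M l (Yvec q A X) = (\<lambda>t. \<Sum>j<q. lam j * (exp (pp l A j t) - 1))"
    using cgf_formula[OF P meas lpos dist ind] unfolding pp_def by (intro ext) blast
  define "is" where "is = sorted_list_of_set (supp l v)"
  have fin: "finite (supp l v)" unfolding supp_def by auto
  have si: "set is = supp l v" "distinct is" using fin unfolding is_def by auto
  have ne: "is \<noteq> []" using si(1) binvecs0_supp[OF v] by auto
  have lt: "\<forall>i\<in>set is. i < l" using si(1) unfolding supp_def by auto
  have "phi M l (Yvec q A X) v = GG l q A (\<lambda>j. lam j * (\<Prod>i\<leftarrow>is. real (A i j))) (\<lambda>_. 0)"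
    unfolding phi_def cg is_def[symmetric] foldr_F[OF lt ne] ..
  also have "\<dots> = (\<Sum>j<q. lam j * (\<Prod>i\<in>supp l v. real (A i j)))"
  proof -
    have pl: "(\<Prod>i\<leftarrow>is. f i) = prod f (supp l v)" for f :: "nat \<Rightarrow> real"
      using prod.distinct_set_conv_list[OF si(2), of f] si(1) by simp
    show ?thesis unfolding GG_def pp_def pl by simp
  qed
  also have "\<dots> = (\<Sum>j<q. if v \<le> col l A j then lam j else 0)"
  proof (intro sum.cong refl)
    fix j assume "j \<in> {..<q}"
    then have "\<And>i. i < l \<Longrightarrow> A i j \<in> {0,1}" using Ab by auto
    then show "lam j * (\<Prod>i\<in>supp l v. real (A i j)) = (if v \<le> col l A j then lam j else 0)"
      using prod_supp[OF v] by simp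
  qed
  finally show ?thesis .
qed


lemma MS_carrier: "MS S \<in> carrier_mat (length S) (length S)"
  unfolding MS_def by simp

lemma MS_mult: assumes x: "x \<in> carrier_vec (length S)" and k: "k < length S"
  shows "(MS S *\<^sub>v x) $ k = (\<Sum>i<length S. if S ! k \<le> S ! i then x $ i else 0)"
proof -
  have "(MS S *\<^sub>v x) $ k = row (MS S) k \<bullet> x" using k by (simp add: MS_def)
  also have "\<dots> = (\<Sum>i\<in>{0..<length S}. row (MS S) k $ i * x $ i)"
    unfolding scalar_prod_def using x by simp
  also have "\<dots> = (\<Sum>i<length S. if S ! k \<le> S ! i then x $ i else 0)"
    using k by (auto simp: atLeast0LessThan MS_def intro!: sum.cong)
  finally show ?thesis .
qed

lemma MS_ker: assumes d: "distinct S" and x: "x \<in> carrier_vec (length S)"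
  and z: "MS S *\<^sub>v x = 0\<^sub>v (length S)"
  shows "x = 0\<^sub>v (length S)"
proof (rule ccontr)
  assume nz: "x \<noteq> 0\<^sub>v (length S)"
  let ?n = "length S"
  define T where "T = {k. k < ?n \<and> x $ k \<noteq> 0}"
  have "T \<noteq> {}"
  proof
    assume "T = {}"
    then have "x = 0\<^sub>v ?n" using x unfolding T_def by (intro eq_vecI) auto
    then show False using nz by blast
  qed
  moreover have "finite T" unfolding T_def by auto
  ultimately obtain m where m: "m \<in> (\<lambda>k. S ! k) ` T" "\<forall>b \<in> (\<lambda>k. S ! k) ` T. m \<le> b \<longrightarrow> m = b"
    using finite_has_maximal[of "(\<lambda>k. S ! k) ` T"] by blast
  then obtain k where k: "k \<in> T" "m = S ! k" by blast
  have kn: "k < ?n" and xk: "x $ k \<noteq> 0" using k(1) unfolding T_def by auto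
  have "(\<Sum>i<?n. if S ! k \<le> S ! i then x $ i else 0) = (\<Sum>i<?n. if i = k then x $ k else 0)"
  proof (intro sum.cong refl)
    fix i assume i: "i \<in> {..<?n}"
    show "(if S ! k \<le> S ! i then x $ i else 0) = (if i = k then x $ k else 0)"
    proof (cases "i = k")
      case False
      show ?thesis
      proof (cases "S ! k \<le> S ! i \<and> x $ i \<noteq> 0")
        case True
        then have "S ! i \<in> (\<lambda>k. S ! k) ` T" using i unfolding T_def by auto
        then have "S ! k = S ! i" using m(2) k(2) True by blast
        then have "i = k" using d i kn by (simp add: nth_eq_iff_index_eq)
        then show ?thesis using False by blast
      next
        case F2: False
        then show ?thesis using False by auto
      qed
    qed simp
  qed
  also have "\<dots> = x $ k" using kn by simp
  finally have "(MS S *\<^sub>v x) $ k = x $ k" using MS_mult[OF x kn] by simp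
  then show False using z xk kn by simp
qed

lemma MS_inverse: assumes d: "distinct S"
  shows "the (mat_inverse (MS S)) * MS S = 1\<^sub>m (length S)"
    and "the (mat_inverse (MS S)) \<in> carrier_mat (length S) (length S)"
proof -
  let ?n = "length S"
  have "det (MS S) \<noteq> 0"
    using MS_ker[OF d] det_0_iff_vec_prod_zero_field[OF MS_carrier[of S]] by blast
  then have U: "MS S \<in> Units (ring_mat TYPE(real) ?n ())"
    by (rule det_non_zero_imp_unit[OF MS_carrier])
  obtain B where B: "mat_inverse (MS S) = Some B"
  proof (cases "mat_inverse (MS S)")
    case None
    then show ?thesis using mat_inverse(1)[OF MS_carrier[of S], of "()"] U by blast
  qed
  then show "the (mat_inverse (MS S)) * MS S = 1\<^sub>m ?n"
    and "the (mat_inverse (MS S)) \<in> carrier_mat ?n ?n"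
    using mat_inverse(2)[OF MS_carrier B] by auto
qed


lemma rho_sum: assumes inj: "inj_on (col l A) {..<q}"
  shows "rho l q A lam u = (\<Sum>j<q. if col l A j = u then lam j else 0)"
proof (cases "\<exists>j<q. col l A j = u")
  case True
  then obtain j0 where j0: "j0 < q" "col l A j0 = u" by blast
  have eq: "col l A j = u \<longleftrightarrow> j = j0" if "j < q" for j
    using inj j0 that unfolding inj_on_def by auto
  have "(THE j. j < q \<and> col l A j = u) = j0"
    by (rule the_equality) (use j0 eq in auto)
  then have "rho l q A lam u = lam j0" unfolding rho_def using True by simp
  also have "\<dots> = (\<Sum>j<q. if j = j0 then lam j else 0)" using j0 by simp
  also have "\<dots> = (\<Sum>j<q. if col l A j = u then lam j else 0)"
    by (intro sum.cong refl) (simp add: eq)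
  finally show ?thesis .
next
  case False
  then show ?thesis unfolding rho_def by (auto intro!: sum.neutral)
qed

lemma key_identity:
  assumes d: "distinct S" and cs: "colset l q A \<subseteq> set S" and inj: "inj_on (col l A) {..<q}"
  shows "(\<Sum>k<length S. if u \<le> S ! k then rho l q A lam (S ! k) else 0) =
         (\<Sum>j<q. if u \<le> col l A j then lam j else 0)"
proof -
  let ?n = "length S"
  have "(\<Sum>k<?n. if u \<le> S ! k then rho l q A lam (S ! k) else 0) =
        (\<Sum>k<?n. \<Sum>j<q. if col l A j = S ! k then (if u \<le> col l A j then lam j else 0) else 0)"
  proof (intro sum.cong refl)
    fix k
    show "(if u \<le> S ! k then rho l q A lam (S ! k) else 0) =
        (\<Sum>j<q. if col l A j = S ! k then (if u \<le> col l A j then lam j else 0) else 0)"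
      unfolding rho_sum[OF inj] by (cases "u \<le> S ! k") (auto intro!: sum.cong sum.neutral)
  qed
  also have "\<dots> = (\<Sum>j<q. \<Sum>k<?n. if col l A j = S ! k then (if u \<le> col l A j then lam j else 0) else 0)"
    by (rule sum.swap)
  also have "\<dots> = (\<Sum>j<q. if u \<le> col l A j then lam j else 0)"
  proof (intro sum.cong refl)
    fix j assume j: "j \<in> {..<q}"
    then have "col l A j \<in> set S" using cs unfolding colset_def by auto
    then obtain k0 where k0: "k0 < ?n" "S ! k0 = col l A j" by (auto simp: in_set_conv_nth)
    have eq: "col l A j = S ! k \<longleftrightarrow> k = k0" if "k < ?n" for k
      using d k0 that by (auto simp: nth_eq_iff_index_eq)
    have "(\<Sum>k<?n. if col l A j = S ! k then (if u \<le> col l A j then lam j else 0) else 0) =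
          (\<Sum>k<?n. if k = k0 then (if u \<le> col l A j then lam j else 0) else 0)"
      by (intro sum.cong refl) (simp add: eq)
    also have "\<dots> = (if u \<le> col l A j then lam j else 0)" using k0 by simp
    finally show "(\<Sum>k<?n. if col l A j = S ! k then (if u \<le> col l A j then lam j else 0) else 0) =
          (if u \<le> col l A j then lam j else 0)" .
  qed
  finally show ?thesis .
qed

lemma psi_rho:
  assumes d: "distinct (map fst V)"
    and sv: "\<forall>p\<in>set V. snd p = (\<Sum>j<q. if fst p \<le> col l A j then lam j else 0)"
    and cs: "colset l q A \<subseteq> fst ` set V"
    and inj: "inj_on (col l A) {..<q}"
  shows "\<forall>i<length V. psi_vec V $ i = rho l q A lam (fst (V ! i))"
proof -
  let ?S = "map fst V"
  let ?n = "length V"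
  define r where "r = vec ?n (\<lambda>k. rho l q A lam (?S ! k))"
  have r: "r \<in> carrier_vec (length ?S)" unfolding r_def by simp
  have cs': "colset l q A \<subseteq> set ?S" using cs by simp
  have phv: "vec ?n (\<lambda>i. snd (V ! i)) = MS ?S *\<^sub>v r"
  proof (rule eq_vecI)
    show "dim_vec (vec ?n (\<lambda>i. snd (V ! i))) = dim_vec (MS ?S *\<^sub>v r)" by (simp add: MS_def)
    fix i assume "i < dim_vec (MS ?S *\<^sub>v r)"
    then have i: "i < length ?S" by (simp add: MS_def)
    have "(MS ?S *\<^sub>v r) $ i = (\<Sum>k<length ?S. if ?S ! i \<le> ?S ! k then r $ k else 0)"
      by (rule MS_mult[OF r i])
    also have "\<dots> = (\<Sum>k<length ?S. if ?S ! i \<le> ?S ! k then rho l q A lam (?S ! k) else 0)"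
      unfolding r_def by (intro sum.cong refl) auto
    also have "\<dots> = (\<Sum>j<q. if ?S ! i \<le> col l A j then lam j else 0)"
      by (rule key_identity[OF d cs' inj])
    also have "\<dots> = snd (V ! i)" using sv i by auto
    finally show "vec ?n (\<lambda>i. snd (V ! i)) $ i = (MS ?S *\<^sub>v r) $ i" using i by simp
  qed
  have "psi_vec V = the (mat_inverse (MS ?S)) *\<^sub>v (MS ?S *\<^sub>v r)"
    unfolding psi_vec_def phv ..
  also have "\<dots> = (the (mat_inverse (MS ?S)) * MS ?S) *\<^sub>v r"
    using MS_inverse(2)[OF d] MS_carrier r by (metis assoc_mult_mat_vec)
  also have "\<dots> = r" using MS_inverse(1)[OF d] r by simp
  finally show ?thesis unfolding r_def by simp
qed


lemma rho_pos: assumes inj: "inj_on (col l A) {..<q}" and lpos: "\<And>j. j < q \<Longrightarrow> lam j > 0"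
  shows "rho l q A lam u > 0 \<longleftrightarrow> u \<in> colset l q A"
proof (cases "\<exists>j<q. col l A j = u")
  case True
  then obtain j0 where j0: "j0 < q" "col l A j0 = u" by blast
  have "(THE j. j < q \<and> col l A j = u) = j0"
    by (rule the_equality) (use j0 inj in \<open>auto simp: inj_on_def\<close>)
  then have "rho l q A lam u = lam j0" unfolding rho_def using True by simp
  then show ?thesis using lpos[OF j0(1)] j0 unfolding colset_def by auto
next
  case False
  then show ?thesis unfolding rho_def colset_def by auto
qed

lemma sum_ge_term:
  fixes lam :: "nat \<Rightarrow> real"
  assumes lpos: "\<forall>j<q. lam j > 0" and k: "k < q" and le: "u \<le> col l A k"
  shows "(\<Sum>j<q. if u \<le> col l A j then lam j else 0) \<ge> lam k"
proof -
  have "(if u \<le> col l A k then lam k else 0) \<le> (\<Sum>j<q. if u \<le> col l A j then lam j else 0)"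
    by (rule member_le_sum) (use k lpos in \<open>auto intro: less_imp_le\<close>)
  then show ?thesis using le by simp
qed

theorem proposition6:
  fixes M :: "'a measure" and X :: "nat \<Rightarrow> 'a \<Rightarrow> nat" and lam :: "nat \<Rightarrow> real"
    and l q :: nat and A :: "nat \<Rightarrow> nat \<Rightarrow> nat"
  assumes "prob_space M"
    and "\<And>j. j < q \<Longrightarrow> X j \<in> measurable M (count_space UNIV)"
    and "\<And>j. j < q \<Longrightarrow> lam j > 0"
    and "\<And>j. j < q \<Longrightarrow> distr M (count_space UNIV) (X j) = measure_pmf (poisson_pmf (lam j))"
    and "prob_space.indep_vars M (\<lambda>_. count_space UNIV) X {..<q}"
    and "\<And>i j. i < l \<Longrightarrow> j < q \<Longrightarrow> A i j \<in> {0, 1}"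
    and "inj_on (col l A) {..<q}"
    and "\<And>j. j < q \<Longrightarrow> col l A j \<noteq> (\<lambda>_. 0)"
  shows "(\<exists>V. alg_result l (phi M l (Yvec q A X)) V) \<and>
    (\<forall>V. alg_result l (phi M l (Yvec q A X)) V \<longrightarrow>
       set V = {(w, phi M l (Yvec q A X) w) | w. w \<in> binvecs0 l \<and> phi M l (Yvec q A X) w > 0}
     \<and> {fst (V ! i) | i. i < length V \<and> psi_vec V $ i > 0} = colset l q A
     \<and> (\<forall>i < length V. fst (V ! i) \<in> colset l q A \<longrightarrow>
          psi_vec V $ i = rho l q A lam (fst (V ! i))))"
proof -
  note P = assms(1) and meas = assms(2) and lpos = assms(3) and dist = assms(4)
    and ind = assms(5) and Ab = assms(6) and inj = assms(7) and cnz = assms(8)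
  have lposA: "\<forall>j<q. lam j > 0" using lpos by blast
  define ph where "ph = phi M l (Yvec q A X)"
  have phf: "ph w = (\<Sum>j<q. if w \<le> col l A j then lam j else 0)" if "w \<in> binvecs0 l" for w
    unfolding ph_def by (rule phi_formula[OF P meas lpos dist ind Ab that])
  have colB: "col l A j \<in> binvecs0 l" if j: "j < q" for j
  proof -
    have "col l A j \<in> binvecs l" unfolding binvecs_def col_def using Ab[OF _ j] by auto
    then show ?thesis unfolding binvecs0_def using cnz[OF j] by blast
  qed
  have down: "ph u > 0" if u: "u \<in> binvecs0 l" and w: "w \<in> binvecs0 l" and uw: "u \<le> w" and p: "ph w > 0" for u w
  proof -
    have "\<exists>j<q. w \<le> col l A j"
    proof (rule ccontr)
      assume "\<not> (\<exists>j<q. w \<le> col l A j)"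
      then have "ph w = 0" unfolding phf[OF w] by (auto intro!: sum.neutral)
      then show False using p by simp
    qed
    then obtain j where j: "j < q" "w \<le> col l A j" by blast
    then have "u \<le> col l A j" using uw by (rule_tac order_trans) auto
    note t = sum_ge_term[OF lposA j(1) this]
    then have "ph u \<ge> lam j" unfolding phf[OF u] by simp
    then show ?thesis using lpos[OF j(1)] by simp
  qed
  have ex: "\<exists>V. alg_result l ph V" by (rule exists_result)
  have main: "set V = {(w, ph w) | w. w \<in> binvecs0 l \<and> ph w > 0}
     \<and> {fst (V ! i) | i. i < length V \<and> psi_vec V $ i > 0} = colset l q A
     \<and> (\<forall>i < length V. fst (V ! i) \<in> colset l q A \<longrightarrow>
          psi_vec V $ i = rho l q A lam (fst (V ! i)))" if res: "alg_result l ph V" for V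
  proof -
    have sV: "set V = {(w, ph w) | w. w \<in> binvecs0 l \<and> ph w > 0}" and d: "distinct (map fst V)"
      by (rule result_set(1)[OF res], rule down; assumption)
         (rule result_set(2)[OF res], rule down; assumption)
    have sv: "\<forall>p\<in>set V. snd p = (\<Sum>j<q. if fst p \<le> col l A j then lam j else 0)"
      using sV phf by auto
    have cs: "colset l q A \<subseteq> fst ` set V"
    proof
      fix u assume "u \<in> colset l q A"
      then obtain j where j: "j < q" "u = col l A j" unfolding colset_def by blast
      have "ph u \<ge> lam j" unfolding j(2) phf[OF colB[OF j(1)]]
        by (rule sum_ge_term[OF lposA j(1)]) simp
      then have "ph u > 0" using lpos[OF j(1)] by simp
      then have "(u, ph u) \<in> set V" using sV colB[OF j(1)] j(2) by blast
      then show "u \<in> fst ` set V" by force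
    qed
    have pr: "\<forall>i<length V. psi_vec V $ i = rho l q A lam (fst (V ! i))"
      by (rule psi_rho[OF d sv cs inj])
    have set2: "{fst (V ! i) | i. i < length V \<and> psi_vec V $ i > 0} = colset l q A"
    proof
      show "{fst (V ! i) | i. i < length V \<and> psi_vec V $ i > 0} \<subseteq> colset l q A"
        using pr rho_pos[OF inj lpos] by auto
      show "colset l q A \<subseteq> {fst (V ! i) | i. i < length V \<and> psi_vec V $ i > 0}"
      proof
        fix u assume u: "u \<in> colset l q A"
        then have "u \<in> fst ` set V" using cs by blast
        then obtain i where i: "i < length V" "fst (V ! i) = u"
          by (metis in_set_conv_nth image_iff)
        have "psi_vec V $ i > 0" using pr i u rho_pos[OF inj lpos] by auto
        then show "u \<in> {fst (V ! i) | i. i < length V \<and> psi_vec V $ i > 0}" using i by blast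
      qed
    qed
    show ?thesis using sV set2 pr by blast
  qed
  show ?thesis unfolding ph_def[symmetric] using ex main by blast
qed
end
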